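(* Let $K$ be an admissible kernel on $X\times Y$ with constant $C_K$. Then $U_K^{m_Y}(x)=C_K$ for every $x\in X$.
   Context: $(X,d_X)$ and $(Y,d_Y)$ are compact metric spaces and $G$ is a compact topological group acting isometrically and transitively on both $X$ and $Y$. $m_X$ and $m_Y$ denote the unique $G$-invariant Radon (Borel) probability measures on $X$ and $Y$. A Borel measurable $K:X\times Y\to\mathbb{R}\cup\{-\infty\}$ is an admissible kernel if: (i) there is $B_K\in[0,\infty)$ with $-\infty\le K(x,y)\le B_K$ for all $x,y$; (ii) $\int_X|K(x,y)|\,dm_X(x)<\infty$ for every $y\in Y$; (iii) for every $y$, $K(\cdot,y)$ is upper semi-continuous; (iv) $K(g(x),y)=K(x,g^{-1}(y))$ for all $g\in G,x\in X,y\in Y$. The constant $C_K$ is the common value of $\int_X K(x,y)\,dm_X(x)$, which does not depend on $y\in Y$. For a Borel probability measure $\mu$ on $Y$, $U_K^\mu(x)=\int_Y K(x,y)\,d\mu(y)$. *)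

theory Defs
  imports "HOL-Analysis.Analysis" "HOL-Probability.Probability"
begin

definition cont_isometric_transitive_action ::
  "('g::topological_group_add \<Rightarrow> 'a::metric_space \<Rightarrow> 'a) \<Rightarrow> 'a set \<Rightarrow> bool" where
  "cont_isometric_transitive_action act S \<longleftrightarrow>
     (\<forall>g. \<forall>x\<in>S. act g x \<in> S) \<and>
     (\<forall>x\<in>S. act 0 x = x) \<and>
     (\<forall>g h. \<forall>x\<in>S. act (g + h) x = act g (act h x)) \<and>
     continuous_on (UNIV \<times> S) (\<lambda>(g, x). act g x) \<and>
     (\<forall>g. \<forall>x\<in>S. \<forall>x'\<in>S. dist (act g x) (act g x') = dist x x') \<and>
     (\<forall>x\<in>S. \<forall>x'\<in>S. \<exists>g. act g x = x')"

definition invariant_borel_prob ::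
  "('g \<Rightarrow> 'a::metric_space \<Rightarrow> 'a) \<Rightarrow> 'a set \<Rightarrow> 'a measure \<Rightarrow> bool" where
  "invariant_borel_prob act S m \<longleftrightarrow>
     prob_space m \<and> space m = S \<and> sets m = sets (restrict_space borel S) \<and>
     (\<forall>g. \<forall>A\<in>sets m. emeasure m (act g -` A \<inter> S) = emeasure m A)"

definition usc_on :: "'a::topological_space set \<Rightarrow> ('a \<Rightarrow> ereal) \<Rightarrow> bool" where
  "usc_on S f \<longleftrightarrow> (\<forall>c. openin (top_of_set S) {x\<in>S. f x < c})"

definition ereal_integral :: "'a measure \<Rightarrow> ('a \<Rightarrow> ereal) \<Rightarrow> ereal" where
  "ereal_integral M f =
     enn2ereal (\<integral>\<^sup>+ x. e2ennreal (f x) \<partial>M) - enn2ereal (\<integral>\<^sup>+ x. e2ennreal (- f x) \<partial>M)"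

text \<open>Admissible kernel K on X \<times> Y (values in \<real> \<union> {-\<infinity>}, encoded as ereal \<noteq> \<infinity>).\<close>
definition admissible_kernel ::
  "('g::topological_group_add \<Rightarrow> 'a::metric_space \<Rightarrow> 'a) \<Rightarrow> ('g \<Rightarrow> 'b::metric_space \<Rightarrow> 'b)
   \<Rightarrow> 'a set \<Rightarrow> 'b set \<Rightarrow> 'a measure \<Rightarrow> ('a \<Rightarrow> 'b \<Rightarrow> ereal) \<Rightarrow> bool" where
  "admissible_kernel actX actY X Y mX K \<longleftrightarrow>
     (\<lambda>(x, y). K x y) \<in> borel_measurable (restrict_space borel (X \<times> Y)) \<and>
     (\<exists>B::real. 0 \<le> B \<and> (\<forall>x\<in>X. \<forall>y\<in>Y. K x y \<le> ereal B)) \<and>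
     (\<forall>y\<in>Y. (\<integral>\<^sup>+ x. e2ennreal \<bar>K x y\<bar> \<partial>mX) < \<infinity>) \<and>
     (\<forall>y\<in>Y. usc_on X (\<lambda>x. K x y)) \<and>
     (\<forall>g. \<forall>x\<in>X. \<forall>y\<in>Y. K (actX g x) y = K x (actY (- g) y))"

end

theory Submission
  imports Defs
begin

lemma finite_net:
  fixes X :: "'a::metric_space set"
  assumes "compact X" "e > 0"
  obtains T where "T \<subseteq> X" "finite T" "X \<subseteq> (\<Union>a\<in>T. ball a e)"
proof -
  have "X \<subseteq> (\<Union>a\<in>X. ball a e)" using assms(2) by auto
  then obtain C where "C \<subseteq> X" "finite C" "X \<subseteq> (\<Union>c\<in>C. ball c e)"
    using compactE_image[OF assms(1), of X "\<lambda>a. ball a e"] by blast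
  then show ?thesis using that by blast
qed

lemma open_Int_prod_sets:
  fixes X :: "'a::metric_space set" and Y :: "'b::metric_space set"
  assumes "compact X" "compact Y" "open W"
  shows "W \<inter> (X \<times> Y) \<in> sets (restrict_space borel X \<Otimes>\<^sub>M restrict_space borel Y)"
proof -
  define r where "r n = 1 / (Suc n :: real)" for n :: nat
  have rpos: "r n > 0" for n unfolding r_def by auto
  have exX: "\<forall>n. \<exists>T. T \<subseteq> X \<and> finite T \<and> X \<subseteq> (\<Union>a\<in>T. ball a (r n))"
  proof
    fix n show "\<exists>T. T \<subseteq> X \<and> finite T \<and> X \<subseteq> (\<Union>a\<in>T. ball a (r n))"
      by (rule finite_net[OF assms(1) rpos[of n]]) blast
  qed
  obtain TX where TX': "\<forall>n. TX n \<subseteq> X \<and> finite (TX n) \<and> X \<subseteq> (\<Union>a\<in>TX n. ball a (r n))"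
    using choice[OF exX] by blast
  have TX: "\<And>n. TX n \<subseteq> X" "\<And>n. finite (TX n)" "\<And>n. X \<subseteq> (\<Union>a\<in>TX n. ball a (r n))"
    using TX' by blast+
  have exY: "\<forall>n. \<exists>T. T \<subseteq> Y \<and> finite T \<and> Y \<subseteq> (\<Union>a\<in>T. ball a (r n))"
  proof
    fix n show "\<exists>T. T \<subseteq> Y \<and> finite T \<and> Y \<subseteq> (\<Union>a\<in>T. ball a (r n))"
      by (rule finite_net[OF assms(2) rpos[of n]]) blast
  qed
  obtain TY where TY': "\<forall>n. TY n \<subseteq> Y \<and> finite (TY n) \<and> Y \<subseteq> (\<Union>a\<in>TY n. ball a (r n))"
    using choice[OF exY] by blast
  have TY: "\<And>n. TY n \<subseteq> Y" "\<And>n. finite (TY n)" "\<And>n. Y \<subseteq> (\<Union>a\<in>TY n. ball a (r n))"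
    using TY' by blast+
  define R where "R n a b = (if ball a (r n) \<times> ball b (r n) \<subseteq> W
     then (ball a (r n) \<inter> X) \<times> (ball b (r n) \<inter> Y) else {})" for n a b
  let ?M = "restrict_space borel X \<Otimes>\<^sub>M restrict_space borel Y"
  have Rs: "R n a b \<in> sets ?M" for n a b
  proof -
    have 1: "ball a (r n) \<inter> X \<in> sets (restrict_space borel X)"
      unfolding sets_restrict_space by (rule image_eqI[where x="ball a (r n)"]) auto
    have 2: "ball b (r n) \<inter> Y \<in> sets (restrict_space borel Y)"
      unfolding sets_restrict_space by (rule image_eqI[where x="ball b (r n)"]) auto
    show ?thesis unfolding R_def using pair_measureI[OF 1 2] by simp
  qed
  have eq: "W \<inter> (X \<times> Y) = (\<Union>n. \<Union>a\<in>TX n. \<Union>b\<in>TY n. R n a b)"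
  proof
    show "(\<Union>n. \<Union>a\<in>TX n. \<Union>b\<in>TY n. R n a b) \<subseteq> W \<inter> (X \<times> Y)"
      unfolding R_def by (force split: if_splits)
  next
    show "W \<inter> (X \<times> Y) \<subseteq> (\<Union>n. \<Union>a\<in>TX n. \<Union>b\<in>TY n. R n a b)"
    proof safe
      fix x y assume xy: "(x, y) \<in> W" "x \<in> X" "y \<in> Y"
      obtain e where e: "e > 0" "ball (x, y) e \<subseteq> W"
        using assms(3) xy(1) open_contains_ball by blast
      have e4: "e / 4 > 0" using e(1) by simp
      from reals_Archimedean[OF e4] obtain n where n: "inverse (real (Suc n)) < e / 4"
        by blast
      have "r n = inverse (real (Suc n))" unfolding r_def by (rule inverse_eq_divide[symmetric])
      with n have rn: "r n < e / 4" by simp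
      obtain a where a: "a \<in> TX n" "x \<in> ball a (r n)" using TX(3)[of n] xy(2) by blast
      obtain b where b: "b \<in> TY n" "y \<in> ball b (r n)" using TY(3)[of n] xy(3) by blast
      have sub: "ball a (r n) \<times> ball b (r n) \<subseteq> W"
      proof safe
        fix u v assume uv: "u \<in> ball a (r n)" "v \<in> ball b (r n)"
        have "dist x u \<le> dist x a + dist a u" by (rule dist_triangle)
        moreover have "dist x a < r n" using a(2) by (simp add: dist_commute)
        moreover have "dist a u < r n" using uv(1) by simp
        ultimately have du: "dist x u < 2 * r n" by linarith
        have "dist y v \<le> dist y b + dist b v" by (rule dist_triangle)
        moreover have "dist y b < r n" using b(2) by (simp add: dist_commute)
        moreover have "dist b v < r n" using uv(2) by simp
        ultimately have dv: "dist y v < 2 * r n" by linarith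
        have "dist (x, y) (u, v) \<le> dist x u + dist y v"
          by (simp add: dist_Pair_Pair sqrt_sum_squares_le_sum)
        also have "\<dots> < e" using du dv rn by linarith
        finally show "(u, v) \<in> W" using e(2) by auto
      qed
      have "(x, y) \<in> R n a b" unfolding R_def using sub a b xy by auto
      then show "(x, y) \<in> (\<Union>n. \<Union>a\<in>TX n. \<Union>b\<in>TY n. R n a b)" using a(1) b(1) by blast
    qed
  qed
  have fin: "(\<Union>a\<in>TX n. \<Union>b\<in>TY n. R n a b) \<in> sets ?M" for n
    by (intro sets.finite_UN TX(2) TY(2) Rs)
  show ?thesis unfolding eq
    by (rule sets.countable_UN) (use fin in blast)
qed


lemma act_measurable:
  fixes act :: "'g::topological_group_add \<Rightarrow> 'a::metric_space \<Rightarrow> 'a"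
  assumes A: "cont_isometric_transitive_action act S" and I: "invariant_borel_prob act S m"
  shows "act g \<in> measurable m m"
proof -
  have iso: "\<forall>x\<in>S. \<forall>x'\<in>S. dist (act g x) (act g x') = dist x x'"
    and into: "\<forall>x\<in>S. act g x \<in> S"
    using A unfolding cont_isometric_transitive_action_def by blast+
  have sm: "sets m = sets (restrict_space borel S)"
    using I unfolding invariant_borel_prob_def by blast
  have cont: "continuous_on S (act g)"
    unfolding continuous_on_iff
  proof (intro ballI allI impI)
    fix x e assume "x \<in> S" "(0::real) < e"
    then show "\<exists>d>0. \<forall>x'\<in>S. dist x' x < d \<longrightarrow> dist (act g x') (act g x) < e"
      using iso by (intro exI[of _ e]) auto
  qed
  have "act g \<in> measurable (restrict_space borel S) borel"
    by (rule borel_measurable_continuous_on_restrict[OF cont])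
  then have "act g \<in> measurable (restrict_space borel S) (restrict_space borel S)"
    by (rule measurable_restrict_space2[rotated]) (use into in \<open>auto simp: space_restrict_space\<close>)
  then show ?thesis
    using measurable_cong_sets[OF sm sm] by blast
qed

lemma act_distr:
  fixes act :: "'g::topological_group_add \<Rightarrow> 'a::metric_space \<Rightarrow> 'a"
  assumes A: "cont_isometric_transitive_action act S" and I: "invariant_borel_prob act S m"
  shows "distr m m (act g) = m"
proof (rule measure_eqI)
  show "sets (distr m m (act g)) = sets m" by simp
  fix B assume "B \<in> sets (distr m m (act g))"
  then have B: "B \<in> sets m" by simp
  have sp: "space m = S" and inv: "\<forall>g. \<forall>A\<in>sets m. emeasure m (act g -` A \<inter> S) = emeasure m A"
    using I unfolding invariant_borel_prob_def by blast+
  show "emeasure (distr m m (act g)) B = emeasure m B"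
    using emeasure_distr[OF act_measurable[OF A I] B] inv B sp by simp
qed


lemma combine_integrals:
  fixes M :: "'b measure" and p q :: "'b \<Rightarrow> ennreal"
  assumes P: "prob_space M" and pm: "p \<in> borel_measurable M" and qm: "q \<in> borel_measurable M"
    and B: "0 \<le> B" and bnd: "\<forall>y\<in>space M. p y \<le> ennreal B"
    and eq: "\<forall>y\<in>space M. enn2ereal (p y) - enn2ereal (q y) = ereal c"
  shows "enn2ereal (\<integral>\<^sup>+y. p y \<partial>M) - enn2ereal (\<integral>\<^sup>+y. q y \<partial>M) = ereal c"
proof -
  interpret prob_space M by (rule P)
  define pr where "pr y = enn2real (p y)" for y
  define qr where "qr y = enn2real (q y)" for y
  have pfin: "p y \<noteq> top" if "y \<in> space M" for y
    using bnd that by (metis ennreal_neq_top neq_top_trans)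
  have qfin: "q y \<noteq> top" if "y \<in> space M" for y
  proof
    assume "q y = top"
    then have "enn2ereal (p y) - enn2ereal (q y) = - \<infinity>"
      using pfin[OF that] by (cases "enn2ereal (p y)") (auto simp: enn2ereal_top)
    then show False using eq that by auto
  qed
  have pe: "p y = ennreal (pr y)" if "y \<in> space M" for y
    using pfin[OF that] unfolding pr_def by (simp add: ennreal_enn2real_if)
  have qe: "q y = ennreal (qr y)" if "y \<in> space M" for y
    using qfin[OF that] unfolding qr_def by (simp add: ennreal_enn2real_if)
  have prn: "0 \<le> pr y" "0 \<le> qr y" for y unfolding pr_def qr_def by simp_all
  have diff: "pr y - qr y = c" if "y \<in> space M" for y
  proof -
    have "enn2ereal (p y) - enn2ereal (q y) = ereal c" using eq that by blast
    then have "enn2ereal (ennreal (pr y)) - enn2ereal (ennreal (qr y)) = ereal c"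
      using pe[OF that] qe[OF that] by simp
    then have "ereal (pr y) - ereal (qr y) = ereal c" using prn by simp
    then show ?thesis by simp
  qed
  have prB: "pr y \<le> B" if "y \<in> space M" for y
  proof -
    have "ennreal (pr y) \<le> ennreal B" using bnd that pe[OF that] by metis
    then show ?thesis using B by (simp add: ennreal_le_iff)
  qed
  have prm: "pr \<in> borel_measurable M" unfolding pr_def using pm by measurable
  have qrm: "qr \<in> borel_measurable M" unfolding qr_def using qm by measurable
  have ip: "integrable M pr"
    by (rule integrable_const_bound[where B=B]) (use prB prn prm in auto)
  have qrB: "qr y \<le> B + \<bar>c\<bar>" if "y \<in> space M" for y
    using prB[OF that] diff[OF that] abs_ge_minus_self[of c] by linarith
  have iq: "integrable M qr"
    by (rule integrable_const_bound[where B="B + \<bar>c\<bar>"])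
       (use qrm qrB prn in \<open>auto intro!: AE_I2\<close>)
  have "(\<integral>\<^sup>+y. p y \<partial>M) = (\<integral>\<^sup>+y. ennreal (pr y) \<partial>M)"
    by (rule nn_integral_cong) (simp add: pe)
  also have "\<dots> = ennreal (integral\<^sup>L M pr)"
    by (rule nn_integral_eq_integral[OF ip]) (simp add: prn)
  finally have I1: "(\<integral>\<^sup>+y. p y \<partial>M) = ennreal (integral\<^sup>L M pr)" .
  have "(\<integral>\<^sup>+y. q y \<partial>M) = (\<integral>\<^sup>+y. ennreal (qr y) \<partial>M)"
    by (rule nn_integral_cong) (simp add: qe)
  also have "\<dots> = ennreal (integral\<^sup>L M qr)"
    by (rule nn_integral_eq_integral[OF iq]) (simp add: prn)
  finally have I2: "(\<integral>\<^sup>+y. q y \<partial>M) = ennreal (integral\<^sup>L M qr)" .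
  have "integral\<^sup>L M qr = integral\<^sup>L M (\<lambda>y. pr y - c)"
  proof (rule Bochner_Integration.integral_cong[OF refl])
    fix y assume "y \<in> space M"
    from diff[OF this] show "qr y = pr y - c" by linarith
  qed
  also have "\<dots> = integral\<^sup>L M pr - c"
    using ip by (simp add: prob_space)
  finally have I3: "integral\<^sup>L M qr = integral\<^sup>L M pr - c" .
  have n1: "0 \<le> integral\<^sup>L M pr" "0 \<le> integral\<^sup>L M qr" by (simp_all add: prn)
  show ?thesis unfolding I1 I2 using n1 I3 by simp
qed


lemma integral_shift:
  fixes actX :: "'g::topological_group_add \<Rightarrow> 'a::metric_space \<Rightarrow> 'a"
    and actY :: "'g \<Rightarrow> 'b::metric_space \<Rightarrow> 'b"
    and K :: "'a \<Rightarrow> 'b \<Rightarrow> ereal" and h :: "ereal \<Rightarrow> ennreal"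
  assumes AX: "cont_isometric_transitive_action actX X"
    and AY: "cont_isometric_transitive_action actY Y"
    and IY: "invariant_borel_prob actY Y mY"
    and eqv: "\<forall>g. \<forall>x\<in>X. \<forall>y\<in>Y. K (actX g x) y = K x (actY (- g) y)"
    and meas: "(\<lambda>y. h (K x y)) \<in> borel_measurable mY"
    and x: "x \<in> X" and x': "x' \<in> X"
  shows "(\<integral>\<^sup>+y. h (K x' y) \<partial>mY) = (\<integral>\<^sup>+y. h (K x y) \<partial>mY)"
proof -
  obtain g where g: "actX g x = x'"
    using AX x x' unfolding cont_isometric_transitive_action_def by blast
  have sp: "space mY = Y" using IY unfolding invariant_borel_prob_def by blast
  have "(\<integral>\<^sup>+y. h (K x' y) \<partial>mY) = (\<integral>\<^sup>+y. h (K x (actY (- g) y)) \<partial>mY)"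
    by (rule nn_integral_cong) (use eqv x g sp in auto)
  also have "\<dots> = (\<integral>\<^sup>+y. h (K x y) \<partial>distr mY mY (actY (- g)))"
  proof -
    have meas': "(\<lambda>y. h (K x y)) \<in> borel_measurable (distr mY mY (actY (- g)))"
      using meas by (simp cong: measurable_cong_sets)
    show ?thesis
      using nn_integral_distr[OF act_measurable[OF AY IY, of "- g"] meas'] by simp
  qed
  also have "\<dots> = (\<integral>\<^sup>+y. h (K x y) \<partial>mY)"
    by (simp add: act_distr[OF AY IY])
  finally show ?thesis .
qed

theorem lemma4p5:
  fixes X :: "'a::metric_space set" and Y :: "'b::metric_space set"
    and actX :: "'g::{topological_group_add, t2_space} \<Rightarrow> 'a \<Rightarrow> 'a"
    and actY :: "'g \<Rightarrow> 'b \<Rightarrow> 'b"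
    and mX :: "'a measure" and mY :: "'b measure"
    and K :: "'a \<Rightarrow> 'b \<Rightarrow> ereal" and C_K :: real
  assumes "compact X" "X \<noteq> {}" "compact Y" "Y \<noteq> {}"
    and "compact (UNIV :: 'g set)"
    and "cont_isometric_transitive_action actX X"
    and "cont_isometric_transitive_action actY Y"
    and "invariant_borel_prob actX X mX"
    and "invariant_borel_prob actY Y mY"
    and "admissible_kernel actX actY X Y mX K"
    and "\<forall>y\<in>Y. ereal_integral mX (\<lambda>x. K x y) = ereal C_K"
  shows "\<forall>x\<in>X. ereal_integral mY (\<lambda>y. K x y) = ereal C_K"
proof
  fix x0 assume x0: "x0 \<in> X"
  note AX = assms(6) and AY = assms(7) and IX = assms(8) and IY = assms(9)
  have PX: "prob_space mX" and spX: "space mX = X" and sX: "sets mX = sets (restrict_space borel X)"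
    using IX unfolding invariant_borel_prob_def by blast+
  have PY: "prob_space mY" and spY: "space mY = Y" and sY: "sets mY = sets (restrict_space borel Y)"
    using IY unfolding invariant_borel_prob_def by blast+
  have Kmeas: "(\<lambda>(x, y). K x y) \<in> borel_measurable (restrict_space borel (X \<times> Y))"
    and eqv: "\<forall>g. \<forall>x\<in>X. \<forall>y\<in>Y. K (actX g x) y = K x (actY (- g) y)"
    using assms(10) unfolding admissible_kernel_def by blast+
  obtain B :: real where B: "0 \<le> B" "\<forall>x\<in>X. \<forall>y\<in>Y. K x y \<le> ereal B"
    using assms(10) unfolding admissible_kernel_def by blast
  interpret pX: prob_space mX by (rule PX)
  interpret pY: prob_space mY by (rule PY)
  interpret P: pair_sigma_finite mX mY by unfold_locales
  have idm: "(\<lambda>z. z) \<in> measurable (mX \<Otimes>\<^sub>M mY) (restrict_space borel (X \<times> Y))"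
  proof (rule measurable_restrict_space2)
    show "(\<lambda>z. z) \<in> space (mX \<Otimes>\<^sub>M mY) \<rightarrow> X \<times> Y"
      by (auto simp: space_pair_measure spX spY)
    show "(\<lambda>z. z) \<in> borel_measurable (mX \<Otimes>\<^sub>M mY)"
    proof (rule borel_measurableI)
      fix S :: "('a \<times> 'b) set" assume "open S"
      have "S \<inter> (X \<times> Y) \<in> sets (restrict_space borel X \<Otimes>\<^sub>M restrict_space borel Y)"
        by (rule open_Int_prod_sets[OF assms(1) assms(3) \<open>open S\<close>])
      moreover have "sets (mX \<Otimes>\<^sub>M mY) = sets (restrict_space borel X \<Otimes>\<^sub>M restrict_space borel Y)"
        by (rule sets_pair_measure_cong[OF sX sY])
      ultimately show "(\<lambda>z. z) -` S \<inter> space (mX \<Otimes>\<^sub>M mY) \<in> sets (mX \<Otimes>\<^sub>M mY)"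
        by (simp add: space_pair_measure spX spY)
    qed
  qed
  have Km: "(\<lambda>(x, y). K x y) \<in> borel_measurable (mX \<Otimes>\<^sub>M mY)"
    using measurable_comp[OF idm Kmeas] by (simp add: comp_def)
  have key: "(\<integral>\<^sup>+y. (\<integral>\<^sup>+x. h (K x y) \<partial>mX) \<partial>mY) = (\<integral>\<^sup>+y. h (K x0 y) \<partial>mY)"
    and pm: "(\<lambda>y. \<integral>\<^sup>+x. h (K x y) \<partial>mX) \<in> borel_measurable mY"
    if hm: "h \<in> borel_measurable borel" for h :: "ereal \<Rightarrow> ennreal"
  proof -
    have Gm: "(\<lambda>z. h (case z of (x, y) \<Rightarrow> K x y)) \<in> borel_measurable (mX \<Otimes>\<^sub>M mY)"
      using measurable_comp[OF Km hm] by (simp add: comp_def)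
    have Gm2: "(\<lambda>(x, y). h (K x y)) \<in> borel_measurable (mX \<Otimes>\<^sub>M mY)"
      using Gm by (simp add: case_prod_beta)
    have secm: "(\<lambda>y. h (K x y)) \<in> borel_measurable mY" if "x \<in> X" for x
      using measurable_Pair2[OF Gm2, of x] that spX by simp
    have "(\<integral>\<^sup>+y. (\<integral>\<^sup>+x. h (K x y) \<partial>mX) \<partial>mY) = (\<integral>\<^sup>+x. (\<integral>\<^sup>+y. h (K x y) \<partial>mY) \<partial>mX)"
      using P.Fubini[OF Gm2] by simp
    also have "\<dots> = (\<integral>\<^sup>+x. (\<integral>\<^sup>+y. h (K x0 y) \<partial>mY) \<partial>mX)"
      by (rule nn_integral_cong)
         (use integral_shift[OF AX AY IY eqv secm[OF x0] x0] spX in auto)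
    also have "\<dots> = (\<integral>\<^sup>+y. h (K x0 y) \<partial>mY)"
      by (simp add: pX.emeasure_space_1)
    finally show "(\<integral>\<^sup>+y. (\<integral>\<^sup>+x. h (K x y) \<partial>mX) \<partial>mY) = (\<integral>\<^sup>+y. h (K x0 y) \<partial>mY)" .
    have "(\<lambda>(y, x). h (K x y)) \<in> borel_measurable (mY \<Otimes>\<^sub>M mX)"
      using measurable_comp[OF measurable_pair_swap' Gm2] by (simp add: comp_def case_prod_beta)
    then show "(\<lambda>y. \<integral>\<^sup>+x. h (K x y) \<partial>mX) \<in> borel_measurable mY"
      using pX.borel_measurable_nn_integral[of "\<lambda>y x. h (K x y)" mY] by simp
  qed
  have h1: "e2ennreal \<in> borel_measurable borel" by measurable
  have h2: "(\<lambda>v::ereal. e2ennreal (- v)) \<in> borel_measurable borel" by measurable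
  have comb: "enn2ereal (\<integral>\<^sup>+y. (\<integral>\<^sup>+x. e2ennreal (K x y) \<partial>mX) \<partial>mY)
      - enn2ereal (\<integral>\<^sup>+y. (\<integral>\<^sup>+x. e2ennreal (- K x y) \<partial>mX) \<partial>mY) = ereal C_K"
  proof (rule combine_integrals[OF PY pm[OF h1] pm[OF h2] B(1)])
    show "\<forall>y\<in>space mY. (\<integral>\<^sup>+x. e2ennreal (K x y) \<partial>mX) \<le> ennreal B"
    proof
      fix y assume y: "y \<in> space mY"
      have "(\<integral>\<^sup>+x. e2ennreal (K x y) \<partial>mX) \<le> (\<integral>\<^sup>+x. ennreal B \<partial>mX)"
      proof (rule nn_integral_mono)
        fix x assume "x \<in> space mX"
        then have "K x y \<le> ereal B" using B(2) y spX spY by blast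
        then show "e2ennreal (K x y) \<le> ennreal B"
          using e2ennreal_mono by fastforce
      qed
      then show "(\<integral>\<^sup>+x. e2ennreal (K x y) \<partial>mX) \<le> ennreal B"
        by (simp add: pX.emeasure_space_1)
    qed
    show "\<forall>y\<in>space mY. enn2ereal (\<integral>\<^sup>+x. e2ennreal (K x y) \<partial>mX)
        - enn2ereal (\<integral>\<^sup>+x. e2ennreal (- K x y) \<partial>mX) = ereal C_K"
      using assms(11) spY unfolding ereal_integral_def by simp
  qed
  show "ereal_integral mY (\<lambda>y. K x0 y) = ereal C_K"
    using comb unfolding ereal_integral_def key[OF h1] key[OF h2] .
qed

end
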